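(* Let $n=2$ and suppose both agents are strategic and have complete and perfect information. For any categorial sequential allocation mechanism $f_\mathcal O$ (with any number $p$ of categories), there exists a profile $P$ such that for $j=1,2$, the rank (in $R_j$) of the bundle allocated to agent $j$ in the subgame-perfect Nash equilibrium is exactly $n^p+1-\prod_{i=1}^{p}k_{j,i}$.
   Context: Basic categorized domain: $n$ agents, $p$ categories $D_i=\{1,\ldots,n\}$ of indivisible items, bundles $\mathfrak D=D_1\times\cdots\times D_p$; each agent $j$ has a linear order $R_j$ over $\mathfrak D$; a profile is $(R_1,\ldots,R_n)$. The rank of a bundle in $R_j$ is its position (top $=1$, bottom $=n^p$). CSAM $f_\mathcal O$: given a linear order $\mathcal O$ over $\{1,\ldots,n\}\times\{1,\ldots,p\}$, in rounds $t=1,\ldots,np$, if the $t$-th element of $\mathcal O$ is $(j,i)$ then agent $j$ chooses an item $d_{j,i}$ from the items of $D_i$ not yet chosen; all choices are observed by all agents; agent $j$ finally receives $(d_{j,1},\ldots,d_{j,p})$. With strategic agents with complete and perfect information, this is an extensive-form game in which each agent's preference over outcomes is her linear order over her final bundle; its subgame-perfect Nash equilibrium is unique. $k_{j,i}$ denotes the number of items of $D_i$ still available right before agent $j$ chooses from $D_i$, i.e. $n$ minus the number of agents who choose from $D_i$ before $j$ in $\mathcal O$. *)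

theory Defs
  imports Main "HOL-Library.FuncSet"
begin

definition bundles :: "nat \<Rightarrow> nat \<Rightarrow> (nat \<Rightarrow> nat) set" where
  "bundles n p = PiE {1..p} (\<lambda>_. {1..n})"

text \<open>A preference R_j is a linear order over bundles; (a,b) in R j means
  that agent j weakly prefers a to b.  A profile gives one per agent.\<close>

definition is_profile :: "nat \<Rightarrow> nat \<Rightarrow> (nat \<Rightarrow> ((nat \<Rightarrow> nat) \<times> (nat \<Rightarrow> nat)) set) \<Rightarrow> bool" where
  "is_profile n p R \<longleftrightarrow> (\<forall>j\<in>{1..n}. linear_order_on (bundles n p) (R j))"

text \<open>Rank of a bundle in a linear order: its position, top = 1.\<close>

definition rank :: "'a set \<Rightarrow> ('a \<times> 'a) set \<Rightarrow> 'a \<Rightarrow> nat" where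
  "rank A r b = card {a \<in> A. (a, b) \<in> r}"

text \<open>A linear order O over {1..n} x {1..p}, given as the list enumerating it
  (t-th element of the list = t-th element of the order).\<close>

definition is_seq_order :: "nat \<Rightarrow> nat \<Rightarrow> (nat \<times> nat) list \<Rightarrow> bool" where
  "is_seq_order n p Ord \<longleftrightarrow> distinct Ord \<and> set Ord = {1..n} \<times> {1..p}"

text \<open>k_{j,i}: items of D_i available right before j chooses from D_i.\<close>

definition kval :: "nat \<Rightarrow> (nat \<times> nat) list \<Rightarrow> nat \<Rightarrow> nat \<Rightarrow> nat" where
  "kval n Ord j i = n - length (filter (\<lambda>x. snd x = i) (takeWhile (\<lambda>x. x \<noteq> (j, i)) Ord))"

text \<open>The extensive-form game of the CSAM f_O.  A history is the list of
  items chosen so far: entry t is the item of category snd (Ord ! t) chosen by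
  agent fst (Ord ! t) in round t+1.\<close>

definition mover :: "(nat \<times> nat) list \<Rightarrow> nat list \<Rightarrow> nat" where
  "mover Ord h = fst (Ord ! length h)"

definition available :: "nat \<Rightarrow> (nat \<times> nat) list \<Rightarrow> nat list \<Rightarrow> nat set" where
  "available n Ord h = {d \<in> {1..n}. \<forall>s<length h. snd (Ord ! s) = snd (Ord ! length h) \<longrightarrow> h ! s \<noteq> d}"

definition valid_history :: "nat \<Rightarrow> (nat \<times> nat) list \<Rightarrow> nat list \<Rightarrow> bool" where
  "valid_history n Ord h \<longleftrightarrow> length h \<le> length Ord \<and>
     (\<forall>t<length h. h ! t \<in> available n Ord (take t h))"

text \<open>A (pure) strategy profile assigns to every history the item chosen by
  the agent who moves there; agent j's strategy is its restriction to the
  histories where j moves.\<close>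

definition feasible :: "nat \<Rightarrow> (nat \<times> nat) list \<Rightarrow> (nat list \<Rightarrow> nat) \<Rightarrow> bool" where
  "feasible n Ord \<sigma> \<longleftrightarrow> (\<forall>h. valid_history n Ord h \<and> length h < length Ord \<longrightarrow> \<sigma> h \<in> available n Ord h)"

definition deviate :: "(nat \<times> nat) list \<Rightarrow> (nat list \<Rightarrow> nat) \<Rightarrow> nat \<Rightarrow> (nat list \<Rightarrow> nat) \<Rightarrow> (nat list \<Rightarrow> nat)" where
  "deviate Ord \<sigma> j \<tau> = (\<lambda>h. if mover Ord h = j then \<tau> h else \<sigma> h)"

definition play :: "(nat \<times> nat) list \<Rightarrow> (nat list \<Rightarrow> nat) \<Rightarrow> nat list \<Rightarrow> nat list" where
  "play Ord \<sigma> h = ((\<lambda>g. g @ [\<sigma> g]) ^^ (length Ord - length h)) h"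

definition alloc :: "nat \<Rightarrow> (nat \<times> nat) list \<Rightarrow> nat list \<Rightarrow> nat \<Rightarrow> (nat \<Rightarrow> nat)" where
  "alloc p Ord h j = (\<lambda>i\<in>{1..p}. h ! (THE t. t < length Ord \<and> Ord ! t = (j, i)))"

definition spne :: "nat \<Rightarrow> nat \<Rightarrow> (nat \<times> nat) list \<Rightarrow> (nat \<Rightarrow> ((nat \<Rightarrow> nat) \<times> (nat \<Rightarrow> nat)) set)
    \<Rightarrow> (nat list \<Rightarrow> nat) \<Rightarrow> bool" where
  "spne n p Ord R \<sigma> \<longleftrightarrow> feasible n Ord \<sigma> \<and>
     (\<forall>h. valid_history n Ord h \<longrightarrow> (\<forall>j\<in>{1..n}. \<forall>\<tau>. feasible n Ord (deviate Ord \<sigma> j \<tau>) \<longrightarrow>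
        (alloc p Ord (play Ord \<sigma> h) j, alloc p Ord (play Ord (deviate Ord \<sigma> j \<tau>) h) j) \<in> R j))"

end

theory Submission
  imports Defs
begin

lemma sum_pow2_lt: "(A::nat set) \<subseteq> {..<n} \<Longrightarrow> (\<Sum>x\<in>A. (2::nat)^x) < 2^n"
proof -
  assume a: "A \<subseteq> {..<n}"
  have "(\<Sum>x\<in>A. (2::nat)^x) \<le> (\<Sum>x\<in>{..<n}. 2^x)"
    by (rule sum_mono2) (use a in auto)
  also have "\<dots> = 2^n - 1" using sum_power2[of n] by (simp add: atLeast0LessThan)
  finally show ?thesis using zero_less_power[of "2::nat" n] by linarith
qed

lemma sum_pow2_inj_aux: "\<forall>A B. (A::nat set) \<subseteq> {..<n} \<longrightarrow> B \<subseteq> {..<n} \<longrightarrow>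
   (\<Sum>x\<in>A. (2::nat)^x) = (\<Sum>x\<in>B. 2^x) \<longrightarrow> A = B"
proof (induction n)
  case 0 then show ?case by auto
next
  case (Suc n)
  show ?case
  proof (intro allI impI)
    fix A B :: "nat set"
    assume A: "A \<subseteq> {..<Suc n}" and B: "B \<subseteq> {..<Suc n}" and e: "(\<Sum>x\<in>A. (2::nat)^x) = (\<Sum>x\<in>B. 2^x)"
    have fA: "finite A" using A finite_subset by blast
    have fB: "finite B" using B finite_subset by blast
    have A': "A - {n} \<subseteq> {..<n}" using A by auto
    have B': "B - {n} \<subseteq> {..<n}" using B by auto
    show "A = B"
    proof (cases "n \<in> A"; cases "n \<in> B")
      assume nA: "n \<in> A" and nB: "n \<in> B"
      have sA: "(\<Sum>x\<in>A. (2::nat)^x) = 2^n + (\<Sum>x\<in>A-{n}. 2^x)" using sum.remove[OF fA nA] by simp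
      have sB: "(\<Sum>x\<in>B. (2::nat)^x) = 2^n + (\<Sum>x\<in>B-{n}. 2^x)" using sum.remove[OF fB nB] by simp
      have "(\<Sum>x\<in>A-{n}. (2::nat)^x) = (\<Sum>x\<in>B-{n}. 2^x)" using sA sB e by simp
      then have "A - {n} = B - {n}" using Suc.IH A' B' by blast
      then show ?thesis using nA nB by blast
    next
      assume nA: "n \<in> A" and nB: "n \<notin> B"
      have "2^n \<le> (\<Sum>x\<in>A. (2::nat)^x)" by (rule member_le_sum) (use fA nA in auto)
      moreover have "B \<subseteq> {..<n}" using B' nB by auto
      then have "(\<Sum>x\<in>B. (2::nat)^x) < 2^n" by (rule sum_pow2_lt)
      ultimately show ?thesis using e by simp
    next
      assume nA: "n \<notin> A" and nB: "n \<in> B"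
      have "2^n \<le> (\<Sum>x\<in>B. (2::nat)^x)" by (rule member_le_sum) (use fB nB in auto)
      moreover have "A \<subseteq> {..<n}" using A' nA by auto
      then have "(\<Sum>x\<in>A. (2::nat)^x) < 2^n" by (rule sum_pow2_lt)
      ultimately show ?thesis using e by simp
    next
      assume nA: "n \<notin> A" and nB: "n \<notin> B"
      have "A \<subseteq> {..<n}" "B \<subseteq> {..<n}" using A' nA B' nB by auto
      then show ?thesis using Suc.IH e by blast
    qed
  qed
qed

lemma sum_pow2_inj: "finite (A::nat set) \<Longrightarrow> finite B \<Longrightarrow> (\<Sum>x\<in>A. (2::nat)^x) = (\<Sum>x\<in>B. 2^x) \<Longrightarrow> A = B"
proof -
  assume fA: "finite A" and fB: "finite B" and e: "(\<Sum>x\<in>A. (2::nat)^x) = (\<Sum>x\<in>B. 2^x)"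
  obtain n where "A \<subseteq> {..<n}" "B \<subseteq> {..<n}"
    using finite_UnI[OF fA fB] unfolding finite_nat_set_iff_bounded by (auto simp: subset_iff)
  then show ?thesis using sum_pow2_inj_aux e by blast
qed


locale csam =
  fixes p :: nat and Ord :: "(nat \<times> nat) list"
  assumes ord: "is_seq_order 2 p Ord"
begin

abbreviation "N \<equiv> length Ord"

lemma dist: "distinct Ord" and setO: "set Ord = {1..2} \<times> {1..p}"
  using ord by (auto simp: is_seq_order_def)

lemma inO: "t < N \<Longrightarrow> (fst (Ord!t) = 1 \<or> fst (Ord!t) = 2) \<and> snd (Ord!t) \<in> {1..p}"
proof -
  assume "t < N" then have "Ord!t \<in> set Ord" by simp
  then have "Ord!t \<in> {1..2} \<times> {1..p}" using setO by simp
  then have "fst (Ord!t) \<in> {1..2} \<and> snd (Ord!t) \<in> {1..p}" by (simp add: mem_Times_iff)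
  then show ?thesis by auto
qed

definition pos :: "nat \<Rightarrow> nat \<Rightarrow> nat" where
  "pos j i = (THE t. t < N \<and> Ord ! t = (j, i))"

lemma pos: assumes "j \<in> {1..2}" "i \<in> {1..p}" shows "pos j i < N" "Ord ! pos j i = (j,i)"
proof -
  have "(j,i) \<in> set Ord" using assms setO by auto
  then have "\<exists>!t. t < N \<and> Ord ! t = (j,i)" by (rule distinct_Ex1[OF dist])
  then have "pos j i < N \<and> Ord ! pos j i = (j,i)" unfolding pos_def by (rule theI')
  then show "pos j i < N" "Ord ! pos j i = (j,i)" by auto
qed

lemma pos_eq: assumes "t < N" "Ord ! t = (j,i)" shows "pos j i = t"
proof -
  have "(j,i) \<in> set Ord" using nth_mem[OF assms(1)] assms(2) by simp
  then have "\<exists>!t. t < N \<and> Ord ! t = (j,i)" by (rule distinct_Ex1[OF dist])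
  then show ?thesis unfolding pos_def by (rule the1_equality) (use assms in auto)
qed

lemma alloc_at: "i \<in> {1..p} \<Longrightarrow> alloc p Ord g j i = g ! pos j i"
  by (simp add: alloc_def pos_def)

definition fp :: "nat \<Rightarrow> bool" where "fp t \<longleftrightarrow> (\<forall>s<t. snd (Ord!s) \<noteq> snd (Ord!t))"

lemma same_cat_fst: "s < N \<Longrightarrow> t < N \<Longrightarrow> s \<noteq> t \<Longrightarrow> snd (Ord!s) = snd (Ord!t) \<Longrightarrow> fst (Ord!s) \<noteq> fst (Ord!t)"
proof -
  assume a: "s < N" "t < N" "s \<noteq> t" "snd (Ord!s) = snd (Ord!t)"
  have "Ord!s \<noteq> Ord!t" using nth_eq_iff_index_eq[OF dist a(1) a(2)] a(3) by simp
  then show ?thesis using a(4) by (auto simp: prod_eq_iff)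
qed

lemma same_cat_unique:
  assumes "s < t" "s' < t" "t < N" "snd (Ord!s) = snd (Ord!t)" "snd (Ord!s') = snd (Ord!t)"
  shows "s = s'"
proof -
  have "fst (Ord!s) \<noteq> fst (Ord!t)" "fst (Ord!s') \<noteq> fst (Ord!t)"
    using same_cat_fst assms by auto
  moreover have "fst (Ord!s) = 1 \<or> fst (Ord!s) = 2" "fst (Ord!s') = 1 \<or> fst (Ord!s') = 2"
    "fst (Ord!t) = 1 \<or> fst (Ord!t) = 2" using inO assms by auto
  ultimately have "fst (Ord!s) = fst (Ord!s')" by auto
  then have "Ord!s = Ord!s'" using assms by (simp add: prod_eq_iff)
  moreover have "s < N" "s' < N" using assms by auto
  ultimately show ?thesis using nth_eq_iff_index_eq[OF dist, of s s'] by simp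
qed

lemma nonfp_first: assumes "t < N" "\<not> fp t"
  shows "\<exists>s<t. fp s \<and> snd (Ord!s) = snd (Ord!t) \<and> fst (Ord!s) \<noteq> fst (Ord!t)"
proof -
  obtain s where s: "s < t" "snd (Ord!s) = snd (Ord!t)" using assms(2) fp_def by auto
  have "fp s" unfolding fp_def
  proof (intro allI impI notI)
    fix s' assume "s' < s" "snd (Ord!s') = snd (Ord!s)"
    then show False using same_cat_unique[of s t s'] s assms(1) by auto
  qed
  moreover have "fst (Ord!s) \<noteq> fst (Ord!t)" using same_cat_fst s assms by auto
  ultimately show ?thesis using s by blast
qed

lemma avail_sub: "available 2 Ord h \<subseteq> {1,2}" by (auto simp: available_def)
lemma avail_fp: "fp (length h) \<Longrightarrow> available 2 Ord h = {1,2}" by (auto simp: available_def fp_def)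

lemma avail_ne: assumes "length h < N" shows "available 2 Ord h \<noteq> {}"
proof (cases "fp (length h)")
  case True then show ?thesis using avail_fp by simp
next
  case False
  obtain s where s: "s < length h" "snd (Ord!s) = snd (Ord!length h)"
    using nonfp_first[OF assms False] by blast
  define d where "d = (if h!s = 1 then 2 else (1::nat))"
  have "d \<in> available 2 Ord h" unfolding available_def
  proof (intro CollectI conjI allI impI)
    show "d \<in> {1..2}" by (simp add: d_def)
    fix s' assume "s' < length h" "snd (Ord!s') = snd (Ord!length h)"
    then have "s' = s" using same_cat_unique[of s "length h" s'] s assms by auto
    then show "h!s' \<noteq> d" by (simp add: d_def)
  qed
  then show ?thesis by blast
qed

lemma valid_nth: assumes "valid_history 2 Ord g" "t < length g"
  shows "g!t \<in> {1,2}" "\<And>s. s < t \<Longrightarrow> snd (Ord!s) = snd (Ord!t) \<Longrightarrow> g!s \<noteq> g!t"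
proof -
  have a: "g!t \<in> available 2 Ord (take t g)" using assms by (simp add: valid_history_def)
  have l: "length (take t g) = t" using assms by simp
  from a show "g!t \<in> {1,2}" using avail_sub by blast
  fix s assume "s < t" "snd (Ord!s) = snd (Ord!t)"
  then show "g!s \<noteq> g!t" using a l by (auto simp: available_def)
qed

lemma valid_snoc: assumes v: "valid_history 2 Ord h" and l: "length h < N" and d: "d \<in> available 2 Ord h"
  shows "valid_history 2 Ord (h @ [d])"
  unfolding valid_history_def
proof (intro conjI allI impI)
  show "length (h@[d]) \<le> N" using l by simp
  fix t assume t: "t < length (h@[d])"
  show "(h@[d])!t \<in> available 2 Ord (take t (h@[d]))"
  proof (cases "t < length h")
    case True then show ?thesis using v by (simp add: valid_history_def nth_append)
  next
    case False then have "t = length h" using t by simp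
    then show ?thesis using d by simp
  qed
qed

lemma valid_Nil: "valid_history 2 Ord []" by (simp add: valid_history_def)

lemma play_ge: "N \<le> length h \<Longrightarrow> play Ord \<sigma> h = h" by (simp add: play_def)

lemma play_step: assumes "length h < N" shows "play Ord \<sigma> h = play Ord \<sigma> (h @ [\<sigma> h])"
proof -
  have e: "N - length h = Suc (N - length (h @ [\<sigma> h]))" using assms by simp
  show ?thesis unfolding play_def by (simp only: e funpow_Suc_right o_apply)
qed

lemma play_props:
  assumes fe: "feasible 2 Ord \<sigma>"
  shows "valid_history 2 Ord h \<Longrightarrow> valid_history 2 Ord (play Ord \<sigma> h) \<and> length (play Ord \<sigma> h) = N \<and>
     take (length h) (play Ord \<sigma> h) = h \<and> (\<forall>t. length h \<le> t \<longrightarrow> t < N \<longrightarrow> play Ord \<sigma> h ! t = \<sigma> (take t (play Ord \<sigma> h)))"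
proof (induction "N - length h" arbitrary: h)
  case 0
  then have "length h = N" by (simp add: valid_history_def)
  then show ?case using 0 by (simp add: play_ge)
next
  case (Suc k)
  have l: "length h < N" using Suc.hyps(2) by simp
  let ?h' = "h @ [\<sigma> h]"
  have v': "valid_history 2 Ord ?h'" using valid_snoc Suc.prems l fe feasible_def by blast
  have k: "k = N - length ?h'" using Suc.hyps(2) by simp
  note IH = Suc.hyps(1)[OF k v']
  have pe: "play Ord \<sigma> h = play Ord \<sigma> ?h'" using play_step l by blast
  define g where "g = play Ord \<sigma> ?h'"
  have tk': "take (Suc (length h)) g = ?h'" using IH g_def by simp
  have "take (length h) g = take (length h) (take (Suc (length h)) g)" by simp
  then have tk: "take (length h) g = h" using tk' by simp
  have "g ! length h = take (Suc (length h)) g ! length h" by simp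
  then have gh: "g ! length h = \<sigma> h" using tk' by simp
  show ?case unfolding pe g_def[symmetric]
  proof (intro conjI allI impI)
    show "valid_history 2 Ord g" "length g = N" using IH g_def by auto
    show "take (length h) g = h" by (rule tk)
    fix t assume t: "length h \<le> t" "t < N"
    show "g ! t = \<sigma> (take t g)"
    proof (cases "t = length h")
      case True then show ?thesis using gh tk by simp
    next
      case False then show ?thesis using IH g_def t by auto
    qed
  qed
qed

lemma play_cong: "(\<And>g. length h \<le> length g \<Longrightarrow> \<sigma>1 g = \<sigma>2 g) \<Longrightarrow> play Ord \<sigma>1 h = play Ord \<sigma>2 h"
proof (induction "N - length h" arbitrary: h)
  case 0 then show ?case by (simp add: play_ge)
next
  case (Suc k)
  have l: "length h < N" using Suc.hyps(2) by simp
  have e: "\<sigma>1 h = \<sigma>2 h" using Suc.prems by simp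
  have "play Ord \<sigma>1 h = play Ord \<sigma>1 (h @ [\<sigma>2 h])" using play_step[OF l, of \<sigma>1] e by simp
  also have "\<dots> = play Ord \<sigma>2 (h @ [\<sigma>2 h])" apply (rule Suc.hyps(1)) using Suc.hyps(2) Suc.prems by auto
  also have "\<dots> = play Ord \<sigma>2 h" using play_step[OF l, of \<sigma>2] by simp
  finally show ?case .
qed


lemma cmp:
  assumes vg: "valid_history 2 Ord g" "length g = N" and vg': "valid_history 2 Ord g'" "length g' = N"
   and hyp: "\<And>t. t < N \<Longrightarrow> fp t \<Longrightarrow> (fst (Ord!t) = j \<longrightarrow> g!t \<le> g'!t) \<and> (fst (Ord!t) \<noteq> j \<longrightarrow> g'!t \<le> g!t)"
   and t: "t < N" "fst (Ord!t) = j"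
  shows "g!t \<le> g'!t"
proof (cases "fp t")
  case True then show ?thesis using hyp t by blast
next
  case False
  obtain s where s: "s < t" "fp s" "snd (Ord!s) = snd (Ord!t)" "fst (Ord!s) \<noteq> fst (Ord!t)"
    using nonfp_first t(1) False by blast
  have sN: "s < N" using s t by simp
  have "g'!s \<le> g!s" using hyp[OF sN s(2)] s(4) t(2) by simp
  moreover have "g!t \<in> {1,2}" "g!s \<in> {1,2}" "g!s \<noteq> g!t"
    using valid_nth[OF vg(1)] vg(2) s t by auto
  moreover have "g'!t \<in> {1,2}" "g'!s \<in> {1,2}" "g'!s \<noteq> g'!t"
    using valid_nth[OF vg'(1)] vg'(2) s t by auto
  ultimately show ?thesis by auto
qed

definition good :: "nat list \<Rightarrow> nat list \<Rightarrow> bool" where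
  "good h g \<longleftrightarrow> take (length h) g = h \<and> (\<forall>t. length h \<le> t \<longrightarrow> t < N \<longrightarrow> fp t \<longrightarrow> g!t = 1)"

definition wexp :: "nat \<Rightarrow> nat \<Rightarrow> nat" where "wexp j i = (if fp (pos j i) then i else i + p)"

definition util :: "nat \<Rightarrow> (nat \<Rightarrow> nat) \<Rightarrow> nat" where
  "util j y = (\<Sum>i\<in>{1..p}. if y i = 1 then 2 ^ wexp j i else 0)"

definition Rel :: "nat \<Rightarrow> ((nat \<Rightarrow> nat) \<times> (nat \<Rightarrow> nat)) set" where
  "Rel j = {(a,b). a \<in> bundles 2 p \<and> b \<in> bundles 2 p \<and> util j b \<le> util j a}"

lemma bnd_val: "a \<in> bundles 2 p \<Longrightarrow> i \<in> {1..p} \<Longrightarrow> a i = 1 \<or> a i = 2"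
proof -
  assume "a \<in> bundles 2 p" "i \<in> {1..p}"
  then have "a i \<in> {1..2}" unfolding bundles_def by (auto simp: PiE_iff)
  then show ?thesis by auto
qed

lemma util_mono: assumes a: "a \<in> bundles 2 p" and b: "b \<in> bundles 2 p" and le: "\<forall>i\<in>{1..p}. a i \<le> b i"
  shows "util j b \<le> util j a"
  unfolding util_def
proof (rule sum_mono)
  fix i assume i: "i \<in> {1..p}"
  have "a i \<le> b i" using le i by blast
  then have "b i = 1 \<Longrightarrow> a i = 1" using bnd_val[OF a i] by auto
  then show "(if b i = 1 then 2 ^ wexp j i else 0) \<le> (if a i = 1 then 2 ^ wexp j i else (0::nat))" by auto
qed

lemma util_strict: assumes a: "a \<in> bundles 2 p" and b: "b \<in> bundles 2 p" and le: "\<forall>i\<in>{1..p}. a i \<le> b i"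
  and i: "i \<in> {1..p}" "a i \<noteq> b i"
  shows "util j b < util j a"
  unfolding util_def
proof (rule sum_strict_mono_ex1)
  show "finite {1..p}" by simp
  show "\<forall>x\<in>{1..p}. (if b x = 1 then 2 ^ wexp j x else 0) \<le> (if a x = 1 then 2 ^ wexp j x else (0::nat))"
  proof
    fix x assume x: "x \<in> {1..p}"
    have "a x \<le> b x" using le x by blast
    then have "b x = 1 \<Longrightarrow> a x = 1" using bnd_val[OF a x] by auto
    then show "(if b x = 1 then 2 ^ wexp j x else 0) \<le> (if a x = 1 then 2 ^ wexp j x else (0::nat))" by auto
  qed
  have "a i \<le> b i" using le i(1) by blast
  then have "a i = 1" "b i = 2" using i(2) bnd_val[OF a i(1)] bnd_val[OF b i(1)] by auto
  then show "\<exists>x\<in>{1..p}. (if b x = 1 then 2 ^ wexp j x else 0) < (if a x = 1 then 2 ^ wexp j x else (0::nat))"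
    using i by force
qed

lemma wexp_inj: "inj_on (wexp j) {1..p}"
  by (auto simp: inj_on_def wexp_def split: if_splits)

lemma util_alt: "util j y = (\<Sum>x\<in>wexp j ` {i\<in>{1..p}. y i = 1}. 2 ^ x)"
proof -
  have "util j y = (\<Sum>i\<in>{i\<in>{1..p}. y i = 1}. 2 ^ wexp j i)"
    unfolding util_def by (rule sum.inter_filter[symmetric]) simp
  also have "\<dots> = (\<Sum>x\<in>wexp j ` {i\<in>{1..p}. y i = 1}. 2 ^ x)"
    by (rule sum.reindex[symmetric, unfolded comp_def]) (rule inj_on_subset[OF wexp_inj], auto)
  finally show ?thesis .
qed

lemma util_inj: assumes a: "a \<in> bundles 2 p" and b: "b \<in> bundles 2 p" and e: "util j a = util j b"
  shows "a = b"
proof -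
  have "wexp j ` {i\<in>{1..p}. a i = 1} = wexp j ` {i\<in>{1..p}. b i = 1}"
    using e unfolding util_alt by (rule sum_pow2_inj[rotated 2]) auto
  then have S: "{i\<in>{1..p}. a i = 1} = {i\<in>{1..p}. b i = 1}"
    using inj_on_image_eq_iff[OF wexp_inj] by blast
  show ?thesis
  proof (rule PiE_ext[OF a[unfolded bundles_def] b[unfolded bundles_def]])
    fix i assume i: "i \<in> {1..p}"
    have "a i = 1 \<longleftrightarrow> b i = 1" using S i by blast
    then show "a i = b i" using bnd_val[OF a i] bnd_val[OF b i] by auto
  qed
qed

lemma profile: "is_profile 2 p Rel"
  unfolding is_profile_def linear_order_on_def partial_order_on_def preorder_on_def refl_on_def
    trans_on_def antisym_on_def total_on_def
  using util_inj util_inj[OF _ _ sym] by (auto simp: Rel_def)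


lemma alloc_in: assumes "valid_history 2 Ord g" "length g = N" "j \<in> {1..2}"
  shows "alloc p Ord g j \<in> bundles 2 p"
  unfolding bundles_def alloc_def pos_def[symmetric] restrict_PiE_iff
proof
  fix i assume i: "i \<in> {1..p}"
  have "g ! pos j i \<in> {1,2}" using valid_nth(1)[OF assms(1)] pos(1)[OF assms(3) i] assms(2) by simp
  then show "g ! pos j i \<in> {1..2}" by auto
qed

definition sstar :: "nat list \<Rightarrow> nat" where "sstar h = (if 1 \<in> available 2 Ord h then 1 else 2)"

lemma sstar_av: "length h < N \<Longrightarrow> sstar h \<in> available 2 Ord h"
proof -
  assume "length h < N"
  then have "available 2 Ord h \<noteq> {}" by (rule avail_ne)
  then show ?thesis using avail_sub[of h] unfolding sstar_def by auto
qed

lemma feas_sstar: "feasible 2 Ord sstar" using sstar_av by (simp add: feasible_def)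

lemma sstar_fp: "fp (length h) \<Longrightarrow> sstar h = 1" using avail_fp by (simp add: sstar_def)

lemma good_sstar: assumes vh: "valid_history 2 Ord h" shows "good h (play Ord sstar h)"
proof -
  note P = play_props[OF feas_sstar vh]
  show ?thesis unfolding good_def
  proof (intro conjI allI impI)
    show "take (length h) (play Ord sstar h) = h" using P by blast
    fix t assume t: "length h \<le> t" "t < N" "fp t"
    have "play Ord sstar h ! t = sstar (take t (play Ord sstar h))" using P t by blast
    also have "\<dots> = 1" using sstar_fp t P by simp
    finally show "play Ord sstar h ! t = 1" .
  qed
qed

lemma spne_sstar: "spne 2 p Ord Rel sstar"
  unfolding spne_def
proof (intro conjI allI impI ballI feas_sstar)
  fix h j \<tau>
  assume vh: "valid_history 2 Ord h" and j: "j \<in> {1..2}" and fe: "feasible 2 Ord (deviate Ord sstar j \<tau>)"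
  define \<sigma>' where "\<sigma>' = deviate Ord sstar j \<tau>"
  define g where "g = play Ord sstar h"
  define g' where "g' = play Ord \<sigma>' h"
  have P: "valid_history 2 Ord g" "length g = N" "take (length h) g = h"
    using play_props[OF feas_sstar vh] g_def by auto
  have P': "valid_history 2 Ord g'" "length g' = N" "take (length h) g' = h"
    "\<And>t. length h \<le> t \<Longrightarrow> t < N \<Longrightarrow> g' ! t = \<sigma>' (take t g')"
    using play_props[OF fe[folded \<sigma>'_def] vh] g'_def by auto
  have gd: "good h g" using good_sstar[OF vh] g_def by simp
  have le: "g!t \<le> g'!t" if t: "t < N" "fst (Ord!t) = j" for t
  proof (rule cmp[OF P(1,2) P'(1,2) _ t])
    fix t assume t: "t < N" "fp t"
    show "(fst (Ord!t) = j \<longrightarrow> g!t \<le> g'!t) \<and> (fst (Ord!t) \<noteq> j \<longrightarrow> g'!t \<le> g!t)"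
    proof (cases "t < length h")
      case True
      have "g!t = h!t" using P(3) True by (metis nth_take)
      moreover have "g'!t = h!t" using P'(3) True by (metis nth_take)
      ultimately show ?thesis by simp
    next
      case False
      have g1: "g!t = 1" using gd t False by (simp add: good_def)
      have "g'!t \<in> {1,2}" using valid_nth(1)[OF P'(1)] P'(2) t by simp
      then have a: "g!t \<le> g'!t" using g1 by auto
      have "fst (Ord!t) \<noteq> j \<Longrightarrow> g'!t \<le> g!t"
      proof -
        assume nj: "fst (Ord!t) \<noteq> j"
        have lt: "length (take t g') = t" using P'(2) t by simp
        have "g'!t = \<sigma>' (take t g')" using P'(4) False t by simp
        also have "\<dots> = sstar (take t g')" using nj lt by (simp add: \<sigma>'_def deviate_def mover_def)
        also have "\<dots> = 1" using sstar_fp t lt by simp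
        finally show ?thesis using g1 by simp
      qed
      then show ?thesis using a by blast
    qed
  qed
  have A: "alloc p Ord g j \<in> bundles 2 p" "alloc p Ord g' j \<in> bundles 2 p"
    using alloc_in P P' j by auto
  have "\<forall>i\<in>{1..p}. alloc p Ord g j i \<le> alloc p Ord g' j i"
    using le pos[OF j] alloc_at by simp
  then have "util j (alloc p Ord g' j) \<le> util j (alloc p Ord g j)" using util_mono A by blast
  then show "(alloc p Ord (play Ord sstar h) j, alloc p Ord (play Ord (deviate Ord sstar j \<tau>) h) j) \<in> Rel j"
    using A unfolding g_def g'_def \<sigma>'_def Rel_def by simp
qed


lemma good_spne: assumes sp: "spne 2 p Ord Rel \<sigma>"
  shows "valid_history 2 Ord h \<Longrightarrow> good h (play Ord \<sigma> h)"
proof (induction "N - length h" arbitrary: h)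
  case 0
  then have "length h = N" by (simp add: valid_history_def)
  then show ?case by (simp add: play_ge good_def)
next
  case (Suc k)
  have fe: "feasible 2 Ord \<sigma>" using sp spne_def by blast
  have vh: "valid_history 2 Ord h" by (rule Suc.prems)
  have l: "length h < N" using Suc.hyps(2) by simp
  have av: "\<sigma> h \<in> available 2 Ord h" using fe vh l feasible_def by blast
  let ?h' = "h @ [\<sigma> h]"
  have v': "valid_history 2 Ord ?h'" using valid_snoc[OF vh l av] .
  have k: "k = N - length ?h'" using Suc.hyps(2) by simp
  have pe: "play Ord \<sigma> h = play Ord \<sigma> ?h'" using play_step l by blast
  define g where "g = play Ord \<sigma> h"
  have gd: "good ?h' g" using Suc.hyps(1)[OF k v'] pe g_def by simp
  have P: "valid_history 2 Ord g" "length g = N" "take (length h) g = h"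
    "\<And>t. length h \<le> t \<Longrightarrow> t < N \<Longrightarrow> g ! t = \<sigma> (take t g)"
    using play_props[OF fe vh] g_def by auto
  have gh: "g ! length h = \<sigma> h" using P(3,4) l by simp
  have s1: "\<sigma> h = 1" if fph: "fp (length h)"
  proof (rule ccontr)
    assume ne: "\<sigma> h \<noteq> 1"
    then have s2: "\<sigma> h = 2" using av avail_sub by auto
    define j where "j = fst (Ord ! length h)"
    define i where "i = snd (Ord ! length h)"
    have j: "j \<in> {1..2}" and i: "i \<in> {1..p}" using inO[OF l] unfolding j_def i_def by auto
    have posji: "pos j i = length h" using pos_eq[OF l] unfolding j_def i_def by simp
    define \<sigma>1 where "\<sigma>1 = \<sigma>(h := 1)"
    have dev: "deviate Ord \<sigma> j \<sigma>1 = \<sigma>1"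
      unfolding deviate_def \<sigma>1_def mover_def j_def by (rule ext) auto
    have av1: "1 \<in> available 2 Ord h" using avail_fp[OF fph] by simp
    have fe1: "feasible 2 Ord \<sigma>1" using fe av1 unfolding feasible_def \<sigma>1_def by auto
    have "\<forall>\<tau>. feasible 2 Ord (deviate Ord \<sigma> j \<tau>) \<longrightarrow>
        (alloc p Ord (play Ord \<sigma> h) j, alloc p Ord (play Ord (deviate Ord \<sigma> j \<tau>) h) j) \<in> Rel j"
      using sp vh j unfolding spne_def by blast
    then have in1: "(alloc p Ord g j, alloc p Ord (play Ord \<sigma>1 h) j) \<in> Rel j"
      using fe1 dev g_def by metis
    let ?h1 = "h @ [1]"
    have v1: "valid_history 2 Ord ?h1" using valid_snoc[OF vh l av1] .
    have "play Ord \<sigma>1 h = play Ord \<sigma>1 ?h1" using play_step[OF l, of \<sigma>1] by (simp add: \<sigma>1_def)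
    also have "\<dots> = play Ord \<sigma> ?h1" by (rule play_cong) (auto simp: \<sigma>1_def)
    finally have pl1: "play Ord \<sigma>1 h = play Ord \<sigma> ?h1" .
    define g1 where "g1 = play Ord \<sigma> ?h1"
    have k1: "k = N - length ?h1" using Suc.hyps(2) by simp
    have gd1: "good ?h1 g1" using Suc.hyps(1)[OF k1 v1] g1_def by simp
    have P1: "valid_history 2 Ord g1" "length g1 = N"
      using play_props[OF fe v1] g1_def by auto
    have tk1: "take (Suc (length h)) g1 = ?h1" using gd1 by (simp add: good_def)
    have "g1 ! length h = take (Suc (length h)) g1 ! length h" by simp
    then have g1h: "g1 ! length h = 1" using tk1 by simp
    have le: "g1!t \<le> g!t" if t: "t < N" "fst (Ord!t) = j" for t
    proof (rule cmp[OF P1 P(1,2) _ t])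
      fix t assume t: "t < N" "fp t"
      have tk1: "take (Suc (length h)) g1 = ?h1" using gd1 by (simp add: good_def)
      have tk: "take (Suc (length h)) g = ?h'" using gd by (simp add: good_def)
      show "(fst (Ord!t) = j \<longrightarrow> g1!t \<le> g!t) \<and> (fst (Ord!t) \<noteq> j \<longrightarrow> g!t \<le> g1!t)"
      proof (cases "t < length h")
        case True
        have "g1!t = ?h1!t" using tk1 True by (metis nth_take less_SucI)
        moreover have "g!t = ?h'!t" using tk True by (metis nth_take less_SucI)
        ultimately show ?thesis using True by (simp add: nth_append)
      next
        case False
        show ?thesis
        proof (cases "t = length h")
          case True
          have "g1!t = 1" using g1h True by simp
          moreover have "g!t \<in> {1,2}" using valid_nth(1)[OF P(1)] P(2) t by simp
          moreover have "fst (Ord!t) = j" using True j_def by simp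
          ultimately show ?thesis by auto
        next
          case False2: False
          have "g1!t = 1" "g!t = 1" using gd1 gd t False False2 by (auto simp: good_def)
          then show ?thesis by simp
        qed
      qed
    qed
    have A: "alloc p Ord g j \<in> bundles 2 p" "alloc p Ord g1 j \<in> bundles 2 p"
      using alloc_in P P1 j by auto
    have "\<forall>i\<in>{1..p}. alloc p Ord g1 j i \<le> alloc p Ord g j i"
      using le pos[OF j] alloc_at by simp
    moreover have "alloc p Ord g1 j i \<noteq> alloc p Ord g j i"
    proof -
      show ?thesis using g1h using alloc_at[OF i] posji gh s2 by simp
    qed
    ultimately have "util j (alloc p Ord g j) < util j (alloc p Ord g1 j)"
      using util_strict A i by blast
    then have "(alloc p Ord g j, alloc p Ord g1 j) \<notin> Rel j" by (simp add: Rel_def)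
    then show False using in1 pl1 g1_def by simp
  qed
  show ?case unfolding g_def[symmetric] good_def
  proof (intro conjI allI impI)
    show "take (length h) g = h" by (rule P(3))
    fix t assume t: "length h \<le> t" "t < N" "fp t"
    show "g ! t = 1"
    proof (cases "t = length h")
      case True then show ?thesis using gh s1 t by simp
    next
      case False then show ?thesis using gd t by (simp add: good_def)
    qed
  qed
qed


definition xs :: "nat \<Rightarrow> nat \<Rightarrow> nat" where "xs j = (\<lambda>i\<in>{1..p}. if fp (pos j i) then 1 else 2)"

lemma good_alloc: assumes gd: "good [] g" and v: "valid_history 2 Ord g" "length g = N" and j: "j \<in> {1..2}"
  shows "alloc p Ord g j = xs j"
proof (rule ext)
  fix i show "alloc p Ord g j i = xs j i"
  proof (cases "i \<in> {1..p}")
    case False then show ?thesis by (auto simp: alloc_def xs_def restrict_def)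
  next
    case True
    let ?t = "pos j i"
    have t: "?t < N" "Ord ! ?t = (j,i)" using pos[OF j True] by auto
    have "g ! ?t = (if fp ?t then 1 else 2)"
    proof (cases "fp ?t")
      case True then show ?thesis using gd t by (simp add: good_def)
    next
      case False
      obtain s where s: "s < ?t" "fp s" "snd (Ord!s) = snd (Ord!?t)" using nonfp_first[OF t(1) False] by blast
      have sN: "s < N" using s t by simp
      have "g!s = 1" using gd s(2) sN by (simp add: good_def)
      moreover have "g!?t \<in> {1,2}" "g!s \<noteq> g!?t" using valid_nth[OF v(1)] v(2) s t by auto
      ultimately show ?thesis using False by auto
    qed
    then show ?thesis using True alloc_at by (simp add: xs_def)
  qed
qed

lemma kval_eq: assumes j: "j \<in> {1..2}" and i: "i \<in> {1..p}"
  shows "kval 2 Ord j i = (if fp (pos j i) then 2 else 1)"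
proof -
  let ?t = "pos j i"
  have t: "?t < N" "Ord ! ?t = (j,i)" using pos[OF j i] by auto
  have tw: "takeWhile (\<lambda>x. x \<noteq> (j,i)) Ord = take ?t Ord"
  proof (rule takeWhile_eq_take_P_nth)
    fix k assume "k < ?t" "k < N"
    then show "Ord ! k \<noteq> (j,i)" using t nth_eq_iff_index_eq[OF dist, of k ?t] by auto
  next
    show "?t < N \<Longrightarrow> \<not> Ord ! ?t \<noteq> (j,i)" using t by simp
  qed
  define L where "L = filter (\<lambda>x. snd x = i) (take ?t Ord)"
  have kv: "kval 2 Ord j i = 2 - length L" by (simp add: kval_def tw L_def)
  have mem: "x \<in> set (take ?t Ord) \<Longrightarrow> \<exists>s<?t. x = Ord ! s" for x
    by (auto simp: in_set_conv_nth)
  show ?thesis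
  proof (cases "fp ?t")
    case True
    have "L = []" unfolding L_def filter_empty_conv
    proof
      fix x assume "x \<in> set (take ?t Ord)"
      then obtain s where "s < ?t" "x = Ord ! s" using mem by blast
      then show "\<not> snd x = i" using True t by (simp add: fp_def)
    qed
    then show ?thesis using kv True by simp
  next
    case False
    obtain s where s: "s < ?t" "snd (Ord!s) = snd (Ord!?t)" using nonfp_first[OF t(1) False] by blast
    have "Ord!s = take ?t Ord ! s" using s(1) by simp
    moreover have "s < length (take ?t Ord)" using s t by simp
    ultimately have "Ord!s \<in> set (take ?t Ord)" by (metis nth_mem)
    then have "Ord ! s \<in> set L" using s t unfolding L_def by simp
    then have ne: "L \<noteq> []" by auto
    have sub: "set L \<subseteq> {(3 - j, i)}"
    proof
      fix x assume "x \<in> set L"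
      then have x: "x \<in> set (take ?t Ord)" "snd x = i" by (auto simp: L_def)
      then obtain s' where s': "s' < ?t" "x = Ord ! s'" using mem by blast
      have "fst x \<noteq> j" using same_cat_fst[of s' ?t] s' t x by auto
      moreover have "fst x = 1 \<or> fst x = 2" using inO[of s'] s' t by auto
      ultimately show "x \<in> {(3 - j, i)}" using x(2) j by (cases x) auto
    qed
    have "distinct L" unfolding L_def using dist by simp
    then have "length L = card (set L)" by (simp add: distinct_card)
    also have "\<dots> \<le> 1" using card_mono[OF _ sub] by simp
    finally have "length L = 1" using ne by (cases L) auto
    then show ?thesis using kv False by simp
  qed
qed

lemma rank_xs: assumes j: "j \<in> {1..2}"
  shows "int (rank (bundles 2 p) (Rel j) (xs j)) = 2^p + 1 - (\<Prod>i=1..p. int (kval 2 Ord j i))"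
proof -
  let ?B = "bundles 2 p"
  define C where "C = PiE {1..p} (\<lambda>i. if fp (pos j i) then {1..2} else {2::nat})"
  define K where "K = (\<Prod>i\<in>{1..p}. if fp (pos j i) then 2 else (1::nat))"
  have finB: "finite ?B" unfolding bundles_def by (simp add: finite_PiE)
  have cardB: "card ?B = 2^p" unfolding bundles_def by (simp add: card_PiE)
  have CB: "C \<subseteq> ?B" unfolding C_def bundles_def by (rule PiE_mono) auto
  have "card C = (\<Prod>i\<in>{1..p}. card (if fp (pos j i) then {1..2} else {2::nat}))"
    by (simp add: C_def card_PiE)
  also have "\<dots> = K" unfolding K_def by (rule prod.cong) auto
  finally have cardC: "card C = K" .
  have xsC: "xs j \<in> C" unfolding xs_def C_def by (auto simp: restrict_PiE_iff)
  have xsB: "xs j \<in> ?B" using xsC CB by blast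
  have ulow: "util j (xs j) < 2 ^ Suc p"
  proof -
    have "util j (xs j) = (\<Sum>x\<in>wexp j ` {i\<in>{1..p}. xs j i = 1}. 2^x)" by (rule util_alt)
    also have "\<dots> < 2 ^ Suc p"
    proof (rule sum_pow2_lt)
      show "wexp j ` {i\<in>{1..p}. xs j i = 1} \<subseteq> {..<Suc p}"
        by (auto simp: xs_def wexp_def split: if_splits)
    qed
    finally show ?thesis .
  qed
  have S: "{a \<in> ?B. (a, xs j) \<in> Rel j} = insert (xs j) (?B - C)"
  proof (rule set_eqI, rule iffI)
    fix a assume "a \<in> {a \<in> ?B. (a, xs j) \<in> Rel j}"
    then have a: "a \<in> ?B" "util j (xs j) \<le> util j a" by (auto simp: Rel_def)
    show "a \<in> insert (xs j) (?B - C)"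
    proof (cases "a \<in> C")
      case False then show ?thesis using a by blast
    next
      case True
      have le: "\<forall>i\<in>{1..p}. xs j i \<le> a i"
      proof
        fix i assume i: "i \<in> {1..p}"
        have "a i \<in> (if fp (pos j i) then {1..2} else {2})" using True i unfolding C_def by (auto simp: PiE_iff)
        then show "xs j i \<le> a i" using i by (auto simp: xs_def split: if_splits)
      qed
      have "util j a \<le> util j (xs j)" by (rule util_mono[OF xsB a(1) le])
      then have "util j a = util j (xs j)" using a(2) by simp
      then have "a = xs j" using util_inj[OF a(1) xsB] by simp
      then show ?thesis by simp
    qed
  next
    fix a assume a: "a \<in> insert (xs j) (?B - C)"
    show "a \<in> {a \<in> ?B. (a, xs j) \<in> Rel j}"
    proof (cases "a = xs j")
      case True then show ?thesis using xsB by (simp add: Rel_def)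
    next
      case False
      then have aB: "a \<in> ?B" "a \<notin> C" using a by auto
      have "a \<in> extensional {1..p}" using aB(1) unfolding bundles_def by (simp add: PiE_iff)
      then obtain i where i: "i \<in> {1..p}" "a i \<notin> (if fp (pos j i) then {1..2} else {2})"
        using aB(2) unfolding C_def by (auto simp: PiE_iff)
      have ai: "a i = 1" "\<not> fp (pos j i)" using i bnd_val[OF aB(1) i(1)] by (auto split: if_splits)
      have "(2::nat) ^ Suc p \<le> 2 ^ (i + p)" using i by (intro power_increasing) auto
      also have "\<dots> = 2 ^ wexp j i" unfolding wexp_def using ai(2) by simp
      also have "\<dots> = (if a i = 1 then 2 ^ wexp j i else 0)" using ai by simp
      also have "\<dots> \<le> util j a" unfolding util_def by (rule member_le_sum) (use i in auto)
      finally have "util j (xs j) \<le> util j a" using ulow by simp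
      then show ?thesis using aB xsB by (simp add: Rel_def)
    qed
  qed
  have finBC: "finite (?B - C)" using finB by simp
  have "rank ?B (Rel j) (xs j) = card (insert (xs j) (?B - C))" unfolding rank_def S ..
  also have "\<dots> = card (?B - C) + 1" using xsC finBC by simp
  also have "\<dots> = 2^p - K + 1" using card_Diff_subset[OF finite_subset[OF CB finB] CB] cardB cardC by simp
  finally have r: "rank ?B (Rel j) (xs j) = 2^p - K + 1" .
  have KB: "K \<le> 2^p" using card_mono[OF finB CB] cardB cardC by simp
  have "(\<Prod>i=1..p. int (kval 2 Ord j i)) = int K"
    unfolding K_def of_nat_prod by (rule prod.cong) (auto simp: kval_eq[OF j])
  moreover have "int (2^p - K + 1) = 2^p + 1 - int K" using KB by (simp add: of_nat_diff)
  ultimately show ?thesis using r by simp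
qed

end

theorem proposition7:
  fixes p :: nat and Ord :: "(nat \<times> nat) list"
  assumes "is_seq_order 2 p Ord"
  shows "\<exists>R. is_profile 2 p R \<and> (\<exists>\<sigma>. spne 2 p Ord R \<sigma>) \<and>
    (\<forall>\<sigma>. spne 2 p Ord R \<sigma> \<longrightarrow>
      (\<forall>j\<in>{1..2}. int (rank (bundles 2 p) (R j) (alloc p Ord (play Ord \<sigma> []) j))
          = 2 ^ p + 1 - (\<Prod>i=1..p. int (kval 2 Ord j i))))"
proof -
  interpret csam p Ord by (rule csam.intro) (rule assms)
  have C: "\<forall>\<sigma>. spne 2 p Ord Rel \<sigma> \<longrightarrow>
      (\<forall>j\<in>{1..2}. int (rank (bundles 2 p) (Rel j) (alloc p Ord (play Ord \<sigma> []) j))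
          = 2 ^ p + 1 - (\<Prod>i=1..p. int (kval 2 Ord j i)))"
  proof (intro allI impI ballI)
    fix \<sigma> and j :: nat assume sp: "spne 2 p Ord Rel \<sigma>" and j: "j \<in> {1..2}"
    have fe: "feasible 2 Ord \<sigma>" using sp spne_def by blast
    have gd: "good [] (play Ord \<sigma> [])" using good_spne[OF sp valid_Nil] .
    have P: "valid_history 2 Ord (play Ord \<sigma> [])" "length (play Ord \<sigma> []) = length Ord"
      using play_props[OF fe valid_Nil] by auto
    have "alloc p Ord (play Ord \<sigma> []) j = xs j" using good_alloc[OF gd P j] .
    then show "int (rank (bundles 2 p) (Rel j) (alloc p Ord (play Ord \<sigma> []) j))
          = 2 ^ p + 1 - (\<Prod>i=1..p. int (kval 2 Ord j i))" using rank_xs[OF j] by simp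
  qed
  show ?thesis using profile spne_sstar C by blast
qed

end
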